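(* There exists a topological dynamical system $(X,T)$ which is a nonminimal E-system, is sensitive but not thickly sensitive, and satisfies $\mathrm{Tran}(X,T)\subsetneq \mathrm{Eq}_{\mathrm{syn}}(X,T)=X$.
   Context: $(X,\varrho)$ compact metric, $T$ continuous surjection. $S_T(U,\delta)=\{n\in\mathbb{N}:\exists x_1,x_2\in U,\ \varrho(T^nx_1,T^nx_2)>\delta\}$, $J_T(U,\delta)=\mathbb N\setminus S_T(U,\delta)$. Sensitive: there is $\delta>0$ with $S_T(U,\delta)$ infinite (equivalently nonempty for all opene $U$); thickly sensitive: there is $\delta>0$ with $S_T(U,\delta)$ thick (containing arbitrarily long blocks of consecutive integers) for all opene $U$. $\mathrm{Eq}_{\mathrm{syn}}(X,T)$: points $x$ such that for every $\varepsilon>0$ some neighborhood $U$ of $x$ has $J_T(U,\varepsilon)$ syndetic (bounded gaps). $\mathrm{Tran}(X,T)$: points with dense orbit. An E-system is a transitive system admitting a $T$-invariant Borel probability measure with full support. *)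

theory Defs
  imports "HOL-Analysis.Analysis" "HOL-Probability.Probability"
begin

definition tds :: "'a::metric_space set \<Rightarrow> ('a \<Rightarrow> 'a) \<Rightarrow> bool" where
  "tds X T \<longleftrightarrow> compact X \<and> X \<noteq> {} \<and> continuous_on X T \<and> T ` X = X"

definition opene :: "'a::metric_space set \<Rightarrow> 'a set \<Rightarrow> bool" where
  "opene X U \<longleftrightarrow> openin (top_of_set X) U \<and> U \<noteq> {}"

text \<open>Here the natural numbers are taken to be the positive integers.\<close>
definition S_T :: "('a::metric_space \<Rightarrow> 'a) \<Rightarrow> 'a set \<Rightarrow> real \<Rightarrow> nat set" where
  "S_T T U \<delta> = {n. n \<ge> 1 \<and> (\<exists>x1\<in>U. \<exists>x2\<in>U. dist ((T ^^ n) x1) ((T ^^ n) x2) > \<delta>)}"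

definition J_T :: "('a::metric_space \<Rightarrow> 'a) \<Rightarrow> 'a set \<Rightarrow> real \<Rightarrow> nat set" where
  "J_T T U \<delta> = {n. n \<ge> 1} - S_T T U \<delta>"

definition thick :: "nat set \<Rightarrow> bool" where
  "thick A \<longleftrightarrow> (\<forall>k. \<exists>m. {m..<m+k} \<subseteq> A)"

definition syndetic :: "nat set \<Rightarrow> bool" where
  "syndetic A \<longleftrightarrow> (\<exists>k. \<forall>m. \<exists>n\<in>A. m \<le> n \<and> n < m + k)"

definition sensitive :: "'a::metric_space set \<Rightarrow> ('a \<Rightarrow> 'a) \<Rightarrow> bool" where
  "sensitive X T \<longleftrightarrow> (\<exists>\<delta>>0. \<forall>U. opene X U \<longrightarrow> infinite (S_T T U \<delta>))"

definition thickly_sensitive :: "'a::metric_space set \<Rightarrow> ('a \<Rightarrow> 'a) \<Rightarrow> bool" where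
  "thickly_sensitive X T \<longleftrightarrow> (\<exists>\<delta>>0. \<forall>U. opene X U \<longrightarrow> thick (S_T T U \<delta>))"

definition Eq_syn :: "'a::metric_space set \<Rightarrow> ('a \<Rightarrow> 'a) \<Rightarrow> 'a set" where
  "Eq_syn X T = {x\<in>X. \<forall>\<epsilon>>0. \<exists>U. openin (top_of_set X) U \<and> x \<in> U \<and> syndetic (J_T T U \<epsilon>)}"

definition orbit :: "('a \<Rightarrow> 'a) \<Rightarrow> 'a \<Rightarrow> 'a set" where
  "orbit T x = {(T ^^ n) x | n. True}"

definition Tran :: "'a::metric_space set \<Rightarrow> ('a \<Rightarrow> 'a) \<Rightarrow> 'a set" where
  "Tran X T = {x\<in>X. closure (orbit T x) = X}"

definition transitive :: "'a::metric_space set \<Rightarrow> ('a \<Rightarrow> 'a) \<Rightarrow> bool" where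
  "transitive X T \<longleftrightarrow> (\<forall>U V. opene X U \<longrightarrow> opene X V \<longrightarrow> (\<exists>n\<ge>1. (T ^^ n) ` U \<inter> V \<noteq> {}))"

definition minimal :: "'a::metric_space set \<Rightarrow> ('a \<Rightarrow> 'a) \<Rightarrow> bool" where
  "minimal X T \<longleftrightarrow> (\<forall>Y. Y \<subseteq> X \<longrightarrow> closed Y \<longrightarrow> Y \<noteq> {} \<longrightarrow> T ` Y \<subseteq> Y \<longrightarrow> Y = X)"

definition has_full_invariant_measure :: "'a::metric_space set \<Rightarrow> ('a \<Rightarrow> 'a) \<Rightarrow> bool" where
  "has_full_invariant_measure X T \<longleftrightarrow>
     (\<exists>M. prob_space M \<and> sets M = sets (restrict_space borel X) \<and> space M = X
        \<and> (\<forall>A\<in>sets M. measure M (T -` A \<inter> X) = measure M A)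
        \<and> (\<forall>U. opene X U \<longrightarrow> emeasure M U > 0))"

definition E_system :: "'a::metric_space set \<Rightarrow> ('a \<Rightarrow> 'a) \<Rightarrow> bool" where
  "E_system X T \<longleftrightarrow> transitive X T \<and> has_full_invariant_measure X T"

end

theory Submission
  imports Defs "HOL-Number_Theory.Cong"
begin

primrec Q :: "nat \<Rightarrow> nat" where
  "Q 0 = (LEAST p. prime p \<and> 0 < p \<and> 4^(0+1) \<le> p)"
| "Q (Suc k) = (LEAST p. prime p \<and> Q k < p \<and> 4^(Suc k+1) \<le> p)"

lemma Q_ex: "\<exists>p. prime p \<and> m < p \<and> 4^(k+1) \<le> (p::nat)"
proof -
  obtain p where "prime p" "p > max m (4^(k+1))" using bigger_prime by blast
  then show ?thesis by auto
qed

lemma Q_props: "prime (Q k) \<and> 4^(k+1) \<le> Q k"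
proof (induction k)
  case 0 from LeastI_ex[OF Q_ex[of 0 0]] show ?case by simp
next
  case (Suc k)
  from LeastI_ex[OF Q_ex[of "Q k" "Suc k"]] show ?case by simp
qed

lemma Q_mono: "Q k < Q (Suc k)"
  using LeastI_ex[OF Q_ex[of "Q k" "Suc k"]] by simp

lemma Q_strict: "j < k \<Longrightarrow> Q j < Q k"
  by (rule lift_Suc_mono_less[of Q, OF Q_mono])

lemma Q_coprime: "j \<noteq> k \<Longrightarrow> coprime (Q j) (Q k)"
proof -
  assume "j \<noteq> k"
  then have "Q j \<noteq> Q k" using Q_strict by (metis less_irrefl nat_neq_iff)
  then show ?thesis using Q_props primes_coprime by blast
qed

lemma Q_big: "4^(k+1) \<le> Q k" using Q_props by blast

lemma Q_gt: "k + 1 < Q k"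
proof -
  have "k + 1 < 2^(k+1)" by (rule less_exp)
  also have "(2::nat)^(k+1) \<le> 4^(k+1)" by (rule power_mono) auto
  finally show ?thesis using Q_big[of k] by linarith
qed

lemma Q_pos: "0 < Q k" using Q_gt[of k] by linarith

lemma crt: "\<exists>n\<ge>L. \<forall>k<K. n mod Q k = r k mod Q k"
proof -
  obtain x where x: "\<forall>k\<in>{..<K}. [x = r k] (mod Q k)"
    using chinese_remainder_nat[of "{..<K}" Q r] Q_coprime by auto
  define P where "P = (\<Prod>k<K. Q k)"
  have P0: "P > 0" unfolding P_def using Q_pos by (simp add: prod_pos)
  define n where "n = x + L * P"
  have "L * 1 \<le> L * P" using P0 by (intro mult_le_mono2) simp
  then have "n \<ge> L" unfolding n_def by linarith
  moreover have "n mod Q k = r k mod Q k" if "k < K" for k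
  proof -
    have "Q k dvd P" unfolding P_def using that by (intro dvd_prodI) auto
    then have "n mod Q k = x mod Q k" unfolding n_def by (auto simp: mod_add_right_eq[symmetric] )
    then show ?thesis using x that by (simp add: cong_def)
  qed
  ultimately show ?thesis by blast
qed

definition R :: "(nat \<Rightarrow> nat) \<Rightarrow> nat \<Rightarrow> nat" where
  "R a = (\<lambda>k. (a k + 1) mod Q k)"

definition inF :: "(nat \<Rightarrow> nat) \<Rightarrow> nat \<Rightarrow> bool" where
  "inF a n \<longleftrightarrow> (\<forall>k. k < (a k + n) mod Q k)"

definition enc :: "(nat \<Rightarrow> nat) \<Rightarrow> (nat \<Rightarrow> bool) \<Rightarrow> nat \<Rightarrow> real" where
  "enc a x = (\<lambda>i. if even i then real (a (i div 2)) else (if x (i div 2) then 1 else 0))"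

definition okp :: "(nat \<Rightarrow> nat) \<Rightarrow> (nat \<Rightarrow> bool) \<Rightarrow> bool" where
  "okp a x \<longleftrightarrow> (\<forall>k. a k < Q k) \<and> (\<forall>n. x n \<longrightarrow> inF a n)"

definition XX :: "(nat \<Rightarrow> real) set" where
  "XX = {enc a x | a x. okp a x}"

definition gg :: "nat \<Rightarrow> real \<Rightarrow> real" where
  "gg q t = t + 1 - real q * max 0 (min 1 (t + 2 - real q))"

definition TT :: "(nat \<Rightarrow> real) \<Rightarrow> nat \<Rightarrow> real" where
  "TT p = (\<lambda>i. if even i then gg (Q (i div 2)) (p i) else p (i + 2))"

lemma gg_nat: "m < q \<Longrightarrow> gg q (real m) = real ((m + 1) mod q)"
proof (cases "m + 1 = q")
  case True
  then show ?thesis unfolding gg_def by auto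
next
  case False
  assume "m < q"
  with False have "m + 1 < q" by simp
  then have "real m + 2 - real q \<le> 0" by linarith
  then show ?thesis using \<open>m+1<q\<close> unfolding gg_def by simp
qed

lemma enc_eq_iff: "enc a x = enc b y \<longleftrightarrow> a = b \<and> x = y"
proof
  assume h: "enc a x = enc b y"
  have "a k = b k" for k using fun_cong[OF h, of "2*k"] unfolding enc_def by simp
  moreover have "x k = y k" for k using fun_cong[OF h, of "2*k+1"] unfolding enc_def by (auto split: if_splits)
  ultimately show "a = b \<and> x = y" by auto
qed auto

lemma TT_enc: "(\<forall>k. a k < Q k) \<Longrightarrow> TT (enc a x) = enc (R a) (\<lambda>n. x (Suc n))"
proof
  fix i assume a: "\<forall>k. a k < Q k"
  show "TT (enc a x) i = enc (R a) (\<lambda>n. x (Suc n)) i"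
  proof (cases "even i")
    case True
    then show ?thesis unfolding TT_def enc_def R_def using gg_nat a by simp
  next
    case False
    then have "(i + 2) div 2 = Suc (i div 2)" by presburger
    moreover have "odd (i+2)" using False by simp
    ultimately show ?thesis unfolding TT_def enc_def R_def using False by simp
  qed
qed

lemma R_lt: "R a k < Q k" unfolding R_def using Q_pos by simp

lemma Rpow: "(\<forall>k. a k < Q k) \<Longrightarrow> (\<lambda>k. (R a k + n) mod Q k) = (\<lambda>k. (a k + Suc n) mod Q k)"
  unfolding R_def by (auto simp: fun_eq_iff mod_add_left_eq)

lemma TT_iter: "(\<forall>k. a k < Q k) \<Longrightarrow> (TT ^^ n) (enc a x) = enc (\<lambda>k. (a k + n) mod Q k) (\<lambda>t. x (t + n))"
proof (induction n arbitrary: a x)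
  case 0 then show ?case by simp
next
  case (Suc n)
  have "(TT ^^ Suc n) (enc a x) = (TT ^^ n) (TT (enc a x))" by (simp only: funpow_Suc_right o_def)
  also have "\<dots> = (TT ^^ n) (enc (R a) (\<lambda>n. x (Suc n)))" using TT_enc Suc.prems by simp
  also have "\<dots> = enc (\<lambda>k. (R a k + n) mod Q k) (\<lambda>t. x (Suc (t + n)))"
    using Suc.IH[of "R a"] R_lt by simp
  also have "\<dots> = enc (\<lambda>k. (a k + Suc n) mod Q k) (\<lambda>t. x (t + Suc n))"
    using Rpow[OF Suc.prems] by simp
  finally show ?case .
qed

lemma inF_shift: "(\<forall>k. a k < Q k) \<Longrightarrow> inF (\<lambda>k. (a k + m) mod Q k) n \<longleftrightarrow> inF a (n + m)"
  unfolding inF_def by (simp add: mod_add_left_eq add.assoc add.commute[of m n])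

lemma okp_iter: "okp a x \<Longrightarrow> okp (\<lambda>k. (a k + n) mod Q k) (\<lambda>t. x (t + n))"
proof -
  assume ok: "okp a x"
  then have a: "\<forall>k. a k < Q k" unfolding okp_def by auto
  show ?thesis unfolding okp_def
  proof (intro conjI allI impI)
    fix k show "(a k + n) mod Q k < Q k" using Q_pos by simp
  next
    fix t assume "x (t + n)"
    then have "inF a (t + n)" using ok unfolding okp_def by auto
    then show "inF (\<lambda>k. (a k + n) mod Q k) t" using inF_shift[OF a] by simp
  qed
qed

lemma XX_iter: "p \<in> XX \<Longrightarrow> (TT ^^ n) p \<in> XX"
proof -
  assume "p \<in> XX"
  then obtain a x where p: "p = enc a x" and ok: "okp a x" unfolding XX_def by blast
  have a: "\<forall>k. a k < Q k" using ok unfolding okp_def by blast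
  have "(TT ^^ n) p = enc (\<lambda>k. (a k + n) mod Q k) (\<lambda>t. x (t + n))" using TT_iter[OF a] p by simp
  moreover have "okp (\<lambda>k. (a k + n) mod Q k) (\<lambda>t. x (t + n))" by (rule okp_iter[OF ok])
  ultimately show ?thesis unfolding XX_def by blast
qed

lemma TT_XX: "TT ` XX = XX"
proof
  show "TT ` XX \<subseteq> XX"
  proof
    fix y assume "y \<in> TT ` XX"
    then obtain p where "p \<in> XX" "y = TT p" by blast
    then show "y \<in> XX" using XX_iter[of p 1] by simp
  qed
next
  show "XX \<subseteq> TT ` XX"
  proof
    fix p assume "p \<in> XX"
    then obtain a x where p: "p = enc a x" and ok: "okp a x" unfolding XX_def by auto
    define a' where "a' = (\<lambda>k. (a k + (Q k - 1)) mod Q k)"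
    define x' where "x' = (\<lambda>t. t \<noteq> 0 \<and> x (t - 1))"
    have alt: "\<forall>k. a k < Q k" using ok okp_def by auto
    have a'lt: "\<forall>k. a' k < Q k" unfolding a'_def using Q_pos by simp
    have Ra': "R a' = a"
    proof
      fix k
      have "(a k + (Q k - 1) + 1) mod Q k = a k"
        using alt Q_pos[of k] by (simp add: mod_add_left_eq)
      then show "R a' k = a k" unfolding R_def a'_def by (simp add: mod_Suc_eq)
    qed
    have "okp a' x'"
      unfolding okp_def
    proof (intro conjI allI impI)
      fix k show "a' k < Q k" using a'lt by auto
    next
      fix n assume "x' n"
      then obtain m where n: "n = Suc m" and xm: "x m" unfolding x'_def by (cases n) auto
      have "inF a m" using ok xm okp_def by auto
      then have "inF (R a') m" using Ra' by simp
      moreover have "inF (R a') m \<longleftrightarrow> inF a' (m + 1)"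
        unfolding R_def using inF_shift[OF a'lt, of 1 m] by simp
      ultimately show "inF a' n" using n by simp
    qed
    moreover have "TT (enc a' x') = p"
      using TT_enc[OF a'lt] Ra' p unfolding x'_def by simp
    ultimately show "p \<in> TT ` XX" unfolding XX_def by blast
  qed
qed

lemma cont_coord: "continuous_on S (\<lambda>p::nat\<Rightarrow>real. p i)"
  by (rule continuous_on_subset[OF continuous_on_product_coordinates]) simp

lemma continuous_TT: "continuous_on S TT"
  unfolding TT_def
proof (intro continuous_on_coordinatewise_then_product)
  fix i
  show "continuous_on S (\<lambda>p. if even i then gg (Q (i div 2)) (p i) else p (i + 2))"
  proof (cases "even i")
    case True
    have "continuous_on S (\<lambda>p. gg (Q (i div 2)) (p i))"
      unfolding gg_def by (intro continuous_intros cont_coord)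
    then show ?thesis using True by simp
  next
    case False then show ?thesis using cont_coord by simp
  qed
qed

definition CC :: "nat \<Rightarrow> real set" where
  "CC i = (if even i then real ` {..<Q (i div 2)} else {0,1})"

definition GG :: "nat \<Rightarrow> nat \<Rightarrow> real set" where
  "GG n k = real ` {m. m < Q k \<and> k < (m + n) mod Q k}"

lemma XX_alt: "XX = {p. (\<forall>i. p i \<in> CC i) \<and> (\<forall>n k. p (2*n+1) = 0 \<or> p (2*k) \<in> GG n k)}"
proof
  show "XX \<subseteq> {p. (\<forall>i. p i \<in> CC i) \<and> (\<forall>n k. p (2*n+1) = 0 \<or> p (2*k) \<in> GG n k)}"
  proof
    fix p assume "p \<in> XX"
    then obtain a x where p: "p = enc a x" and ok: "okp a x" unfolding XX_def by auto
    have alt: "a k < Q k" for k using ok okp_def by auto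
    have e2: "enc a x (2*k) = real (a k)" for k by (simp add: enc_def)
    have e3: "enc a x (2*n+1) = (if x n then 1 else 0)" for n by (simp add: enc_def)
    have "p i \<in> CC i" for i
    proof (cases "even i")
      case True
      then obtain k where i: "i = 2*k" by blast
      show ?thesis unfolding p i e2 CC_def using alt[of k] by simp
    next
      case False
      then obtain n where i: "i = 2*n+1" using oddE by blast
      show ?thesis unfolding p i e3 CC_def by simp
    qed
    moreover have "p (2*n+1) = 0 \<or> p (2*k) \<in> GG n k" for n k
    proof (cases "x n")
      case True
      then have "inF a n" using ok okp_def by auto
      then have "a k \<in> {m. m < Q k \<and> k < (m + n) mod Q k}" using alt[of k] unfolding inF_def by simp
      then have "p (2*k) \<in> GG n k" unfolding p e2 GG_def by (rule imageI)
      then show ?thesis by simp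
    next
      case False then show ?thesis unfolding p e3 by simp
    qed
    ultimately show "p \<in> {p. (\<forall>i. p i \<in> CC i) \<and> (\<forall>n k. p (2*n+1) = 0 \<or> p (2*k) \<in> GG n k)}" by auto
  qed
next
  show "{p. (\<forall>i. p i \<in> CC i) \<and> (\<forall>n k. p (2*n+1) = 0 \<or> p (2*k) \<in> GG n k)} \<subseteq> XX"
  proof
    fix p assume "p \<in> {p. (\<forall>i. p i \<in> CC i) \<and> (\<forall>n k. p (2*n+1) = 0 \<or> p (2*k) \<in> GG n k)}"
    then have C: "\<And>i. p i \<in> CC i" and G: "\<And>n k. p (2*n+1) = 0 \<or> p (2*k) \<in> GG n k" by auto
    define a where "a k = nat \<lfloor>p (2*k)\<rfloor>" for k
    define x where "x n = (p (2*n+1) = 1)" for n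
    have pa: "p (2*k) = real (a k) \<and> a k < Q k" for k
    proof -
      from C[of "2*k"] obtain m where "m < Q k" "p (2*k) = real m" unfolding CC_def by auto
      then show ?thesis unfolding a_def by simp
    qed
    have px: "p (2*n+1) = (if x n then 1 else 0)" for n
    proof -
      have "p (2*n+1) \<in> {0,1}" using C[of "2*n+1"] unfolding CC_def by simp
      then show ?thesis unfolding x_def by auto
    qed
    have "p = enc a x"
    proof
      fix i show "p i = enc a x i"
      proof (cases "even i")
        case True
        then obtain k where "i = 2*k" by blast
        then show ?thesis using pa[of k] unfolding enc_def by simp
      next
        case False
        then obtain n where "i = 2*n+1" using oddE by blast
        then show ?thesis using px[of n] unfolding enc_def by simp
      qed
    qed
    moreover have "okp a x" unfolding okp_def inF_def
    proof (intro conjI allI impI)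
      fix k show "a k < Q k" using pa by auto
    next
      fix n k assume "x n"
      then have "p (2*k) \<in> GG n k" using G[of n k] unfolding x_def by auto
      then show "k < (a k + n) mod Q k" using pa[of k] unfolding GG_def by auto
    qed
    ultimately show "p \<in> XX" unfolding XX_def by auto
  qed
qed

lemma closed_coord: "closed S \<Longrightarrow> closed {p::nat\<Rightarrow>real. p i \<in> S}"
proof -
  assume "closed S"
  have "closed ((\<lambda>p::nat\<Rightarrow>real. p i) -` S)"
    using \<open>closed S\<close> by (rule continuous_closed_vimage)
       (metis continuous_on_product_coordinates continuous_on_eq_continuous_at open_UNIV UNIV_I)
  then show ?thesis by (simp add: vimage_def)
qed

lemma compact_XX: "compact XX"
proof -
  have fin: "finite (CC i)" for i unfolding CC_def by auto
  have "compactin (product_topology (\<lambda>i. euclidean) UNIV) (PiE UNIV CC)"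
    unfolding compactin_PiE using fin finite_imp_compact by auto
  then have cpt: "compact (PiE UNIV CC)" by (simp add: euclidean_product_topology)
  have eq: "XX = PiE UNIV CC \<inter> (\<Inter>n. \<Inter>k. {p. p (2*n+1) \<in> {0}} \<union> {p. p (2*k) \<in> GG n k})"
    unfolding XX_alt by (auto simp: PiE_iff)
  have cl: "closed ({p. p (2*n+1) \<in> {0}} \<union> {p. p (2*k) \<in> GG n k})" for n k
    unfolding GG_def by (intro closed_Un closed_coord) (auto intro: finite_imp_closed)
  then have "closed (\<Inter>n. \<Inter>k. {p. p (2*n+1) \<in> {0}} \<union> {p. p (2*k) \<in> GG n k})"
    by (intro closed_INT ballI cl)
  then show ?thesis unfolding eq using cpt by (simp add: compact_Int_closed)
qed

definition cut :: "nat \<Rightarrow> nat" where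
  "cut N = Suc (Max (from_nat ` {..N} :: nat set))"

lemma dist_small:
  fixes p p' :: "nat \<Rightarrow> real"
  assumes "\<forall>i<cut N. p i = p' i"
  shows "dist p p' \<le> (1/2)^N"
proof -
  have "{dist (p (from_nat n)) (p' (from_nat n)) |n. n \<le> N} = {0}"
  proof -
    have "from_nat n < cut N" if "n \<le> N" for n
      unfolding cut_def using that by (simp add: le_imp_less_Suc)
    then show ?thesis using assms by (auto intro!: exI[of _ 0])
  qed
  then show ?thesis using dist_fun_le_dist_first_terms[of p p' N] by simp
qed

lemma dist_big:
  fixes p p' :: "nat \<Rightarrow> real"
  shows "(1/2)^(to_nat i) * min (dist (p i) (p' i)) 1 \<le> dist p p'"
proof -
  define f where "f n = (1/2)^n * min (dist (p (from_nat n)) (p' (from_nat n))) 1" for n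
  have s: "summable f" unfolding f_def
    by (rule summable_comparison_test'[of "\<lambda>n. (1/2)^n"]) (auto simp add: summable_geometric_iff)
  have "sum f {to_nat i} \<le> suminf f"
    by (rule sum_le_suminf[OF s]) (auto simp: f_def)
  then show ?thesis unfolding f_def dist_fun_def by simp
qed

lemma open_nbhd:
  assumes "openin (top_of_set XX) U" "p0 \<in> U"
  shows "\<exists>B. \<forall>p\<in>XX. (\<forall>i<B. p i = p0 i) \<longrightarrow> p \<in> U"
proof -
  obtain e where e: "e > 0" "ball p0 e \<inter> XX \<subseteq> U" using assms openin_contains_ball by metis
  obtain N where N: "(1/2::real)^N < e" using real_arch_pow_inv[OF e(1), of "1/2"] by auto
  show ?thesis
  proof (intro exI ballI impI)
    fix p assume "p \<in> XX" "\<forall>i<cut N. p i = p0 i"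
    then have "dist p0 p \<le> (1/2)^N" using dist_small[of N p0 p] by auto
    then show "p \<in> U" using e N \<open>p\<in>XX\<close> by (auto simp: dist_commute)
  qed
qed

lemma enc_agree: "(\<forall>k<B. a k = a' k) \<Longrightarrow> (\<forall>t<B. x t = x' t) \<Longrightarrow> \<forall>i<B. enc a x i = enc a' x' i"
  unfolding enc_def by auto

lemma card_bad: "card {c. c < Q k \<and> (c + t) mod Q k \<le> k} \<le> k + 1"
proof -
  have "inj_on (\<lambda>c. (c + t) mod Q k) {c. c < Q k \<and> (c + t) mod Q k \<le> k}"
  proof
    fix c c' assume "c \<in> {c. c < Q k \<and> (c + t) mod Q k \<le> k}" "c' \<in> {c. c < Q k \<and> (c + t) mod Q k \<le> k}"
      and h: "(c + t) mod Q k = (c' + t) mod Q k"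
    then have "[c + t = c' + t] (mod Q k)" by (simp add: cong_def)
    then have "[c = c'] (mod Q k)" by (simp add: cong_add_rcancel_nat)
    then show "c = c'" using \<open>c \<in> _\<close> \<open>c' \<in> _\<close> by (simp add: cong_def)
  qed
  then have "card {c. c < Q k \<and> (c + t) mod Q k \<le> k} \<le> card {..k}"
    by (rule card_inj_on_le) auto
  then show ?thesis by simp
qed

lemma good_choice:
  assumes "finite Ts" "card Ts * (k+1) < Q k"
  shows "\<exists>c<Q k. \<forall>t\<in>Ts. k < (c + t) mod Q k"
proof -
  let ?bad = "\<Union>t\<in>Ts. {c. c < Q k \<and> (c + t) mod Q k \<le> k}"
  have "card ?bad \<le> (\<Sum>t\<in>Ts. card {c. c < Q k \<and> (c + t) mod Q k \<le> k})"
    by (rule card_UN_le[OF assms(1)])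
  also have "\<dots> \<le> (\<Sum>t\<in>Ts. k + 1)" by (intro sum_mono card_bad)
  also have "\<dots> = card Ts * (k+1)" by simp
  finally have "card ?bad < card {..<Q k}" using assms by simp
  have fin: "finite ?bad" by (rule finite_subset[of _ "{..<Q k}"]) auto
  have "\<not> {..<Q k} \<subseteq> ?bad"
  proof
    assume "{..<Q k} \<subseteq> ?bad"
    then have "card {..<Q k} \<le> card ?bad" by (rule card_mono[OF fin])
    then show False using \<open>card ?bad < card {..<Q k}\<close> by simp
  qed
  then obtain c where "c < Q k" "c \<notin> ?bad" by auto
  then show ?thesis by (intro exI[of _ c]) auto
qed

lemma K_ok: "c \<le> k \<Longrightarrow> c * (k+1) < Q k"
proof -
  assume "c \<le> k"
  then have "c * (k+1) \<le> (k+1) * (k+1)" by (intro mult_le_mono1) simp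
  also have "\<dots> < 2^(k+1) * 2^(k+1)" using less_exp[of "k+1"] by (intro mult_strict_mono) auto
  also have "\<dots> = (2*2)^(k+1)" by (rule power_mult_distrib[symmetric])
  also have "\<dots> = 4^(k+1)" by simp
  also have "\<dots> \<le> Q k" by (rule Q_big)
  finally show ?thesis .
qed

lemma okp_lt: "okp a x \<Longrightarrow> a k < Q k" unfolding okp_def by auto
lemma okp_inF: "okp a x \<Longrightarrow> x n \<Longrightarrow> inF a n" unfolding okp_def by auto

lemma align_mod:
  fixes al bl m q :: nat
  assumes "al < q" "bl < q" "m mod q = (bl + q - al) mod q"
  shows "(al + m) mod q = bl"
proof -
  have "(al + m) mod q = (al + m mod q) mod q" by (simp add: mod_add_right_eq)
  also have "\<dots> = (al + (bl + q - al)) mod q" using assms(3) by (simp add: mod_add_right_eq)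
  also have "al + (bl + q - al) = bl + q" using assms(1) by simp
  finally show ?thesis using assms(2) by simp
qed

lemma shift_mod:
  fixes al bl m q s :: nat
  assumes "m \<le> s" "(al + m) mod q = bl"
  shows "(al + s) mod q = (bl + (s - m)) mod q"
proof -
  have "(al + s) mod q = ((al + m) + (s - m)) mod q" using assms(1) by simp
  also have "\<dots> = ((al + m) mod q + (s - m)) mod q" by (rule mod_add_left_eq[symmetric])
  finally show ?thesis using assms(2) by simp
qed

definition choose_good :: "nat set \<Rightarrow> nat \<Rightarrow> nat" where
  "choose_good Ts k = (SOME c. c < Q k \<and> (\<forall>t\<in>Ts. k < (c + t) mod Q k))"

lemma choose_good:
  assumes "finite Ts" "card Ts \<le> k"
  shows "choose_good Ts k < Q k \<and> (\<forall>t\<in>Ts. k < (choose_good Ts k + t) mod Q k)"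
proof -
  have "card Ts * (k+1) < Q k" using K_ok[OF assms(2)] .
  from good_choice[OF assms(1) this] show ?thesis unfolding choose_good_def by (rule someI_ex)
qed

lemma trans_points:
  assumes okA: "okp \<alpha> \<xi>" and okB: "okp \<beta> \<eta>"
  shows "\<exists>m\<ge>1. \<exists>a x. okp a x \<and> (\<forall>k<B. a k = \<alpha> k) \<and> (\<forall>t<B. x t = \<xi> t)
            \<and> (\<forall>k<B. (a k + m) mod Q k = \<beta> k) \<and> (\<forall>t<B. x (t + m) = \<eta> t)"
proof -
  define K where "K = 2*B"
  obtain m where m: "m \<ge> B + 1" "\<forall>k<K. m mod Q k = (\<beta> k + Q k - \<alpha> k) mod Q k"
    using crt[of "B+1" K "\<lambda>k. \<beta> k + Q k - \<alpha> k"] by auto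
  have al: "(\<alpha> k + m) mod Q k = \<beta> k" if "k < K" for k
    using align_mod[OF okp_lt[OF okA] okp_lt[OF okB]] m(2) that by blast
  define Ts where "Ts = {t. t<B \<and> \<xi> t} \<union> (\<lambda>t. t + m) ` {t. t<B \<and> \<eta> t}"
  have finTs: "finite Ts" unfolding Ts_def by auto
  have cardTs: "card Ts \<le> K"
  proof -
    have "card Ts \<le> card {t. t<B \<and> \<xi> t} + card ((\<lambda>t. t + m) ` {t. t<B \<and> \<eta> t})"
      unfolding Ts_def by (rule card_Un_le)
    also have "\<dots> \<le> card {..<B} + card {..<B}"
      by (intro add_mono card_mono order.trans[OF card_image_le]) auto
    finally show ?thesis unfolding K_def by simp
  qed
  define a where "a k = (if k < K then \<alpha> k else choose_good Ts k)" for k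
  define x where "x t = ((t<B \<and> \<xi> t) \<or> (m \<le> t \<and> t < m + B \<and> \<eta> (t - m)))" for t
  have ok: "okp a x" unfolding okp_def
  proof (intro conjI allI impI)
    fix k show "a k < Q k"
      unfolding a_def using okp_lt[OF okA] choose_good[OF finTs, of k] cardTs by auto
  next
    fix t assume xt: "x t"
    show "inF a t" unfolding inF_def
    proof
      fix k
      show "k < (a k + t) mod Q k"
      proof (cases "k < K")
        case True
        then have ak: "a k = \<alpha> k" unfolding a_def by simp
        show ?thesis
        proof (cases "t<B \<and> \<xi> t")
          case True
          then show ?thesis using okp_inF[OF okA] ak unfolding inF_def by auto
        next
          case False
          then have t: "m \<le> t" "\<eta> (t - m)" using xt x_def by auto
          have "k < (\<beta> k + (t - m)) mod Q k" using okp_inF[OF okB t(2)] unfolding inF_def by auto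
          then show ?thesis using shift_mod[OF t(1) al[OF True]] ak by simp
        qed
      next
        case False
        have "t \<in> Ts"
        proof (cases "t<B \<and> \<xi> t")
          case True then show ?thesis unfolding Ts_def by auto
        next
          case False
          then have t: "m \<le> t" "t < m + B" "\<eta> (t - m)" using xt x_def by auto
          then have "t = (t - m) + m" "t - m < B" by auto
          then show ?thesis unfolding Ts_def using t(3) by blast
        qed
        then show ?thesis using False choose_good[OF finTs, of k] cardTs unfolding a_def by auto
      qed
    qed
  qed
  show ?thesis
  proof (intro exI conjI)
    show "1 \<le> m" using m by simp
    show "okp a x" by (rule ok)
    show "\<forall>k<B. a k = \<alpha> k" unfolding a_def K_def by simp
    show "\<forall>t<B. x t = \<xi> t" unfolding x_def using m by auto
    show "\<forall>k<B. (a k + m) mod Q k = \<beta> k" using al unfolding a_def K_def by simp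
    show "\<forall>t<B. x (t + m) = \<eta> t" unfolding x_def using m by auto
  qed
qed

lemma sens_points:
  assumes okA: "okp \<alpha> \<xi>"
  shows "\<exists>n\<ge>N0. n \<ge> B \<and> (\<exists>a x. okp a x \<and> x n \<and> (\<forall>k<B. a k = \<alpha> k) \<and> (\<forall>t<B. x t = \<xi> t))"
proof -
  define K where "K = B + 1"
  obtain n where n: "n \<ge> max N0 B" "\<forall>k<K. n mod Q k = ((Q k - 1) + Q k - \<alpha> k) mod Q k"
    using crt[of "max N0 B" K "\<lambda>k. (Q k - 1) + Q k - \<alpha> k"] by auto
  have al: "(\<alpha> k + n) mod Q k = Q k - 1" if "k < K" for k
    using align_mod[OF okp_lt[OF okA], of "Q k - 1"] n(2) that Q_pos[of k] by auto
  define Ts where "Ts = {t. t<B \<and> \<xi> t} \<union> {n}"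
  have finTs: "finite Ts" unfolding Ts_def by auto
  have cardTs: "card Ts \<le> K"
  proof -
    have "card Ts \<le> card {t. t<B \<and> \<xi> t} + card {n}" unfolding Ts_def by (rule card_Un_le)
    also have "\<dots> \<le> card {..<B} + 1" by (intro add_mono card_mono) auto
    finally show ?thesis unfolding K_def by simp
  qed
  define a where "a k = (if k < K then \<alpha> k else choose_good Ts k)" for k
  define x where "x t = ((t<B \<and> \<xi> t) \<or> t = n)" for t
  have ok: "okp a x" unfolding okp_def
  proof (intro conjI allI impI)
    fix k show "a k < Q k"
      unfolding a_def using okp_lt[OF okA] choose_good[OF finTs, of k] cardTs by auto
  next
    fix t assume xt: "x t"
    show "inF a t" unfolding inF_def
    proof
      fix k
      show "k < (a k + t) mod Q k"
      proof (cases "k < K")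
        case True
        then have ak: "a k = \<alpha> k" unfolding a_def by simp
        show ?thesis
        proof (cases "t<B \<and> \<xi> t")
          case True
          then show ?thesis using okp_inF[OF okA] ak unfolding inF_def by auto
        next
          case False
          then have "t = n" using xt x_def by auto
          then show ?thesis using al[OF True] ak Q_gt[of k] by simp
        qed
      next
        case False
        have "t \<in> Ts" using xt unfolding x_def Ts_def by auto
        then show ?thesis using False choose_good[OF finTs, of k] cardTs unfolding a_def by auto
      qed
    qed
  qed
  show ?thesis
  proof (intro exI conjI)
    show "N0 \<le> n" "B \<le> n" using n by auto
    show "okp a x" by (rule ok)
    show "x n" unfolding x_def by simp
    show "\<forall>k<B. a k = \<alpha> k" unfolding a_def K_def by simp
    show "\<forall>t<B. x t = \<xi> t" unfolding x_def using n by auto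
  qed
qed

lemma XX_enc: "p \<in> XX \<Longrightarrow> \<exists>a x. p = enc a x \<and> okp a x"
  unfolding XX_def by blast

lemma enc_in: "okp a x \<Longrightarrow> enc a x \<in> XX"
  unfolding XX_def by blast

lemma iter_enc: "okp a x \<Longrightarrow> (TT ^^ n) (enc a x) = enc (\<lambda>k. (a k + n) mod Q k) (\<lambda>t. x (t + n))"
  using TT_iter okp_lt by blast

lemma opene_sub: "opene XX U \<Longrightarrow> U \<subseteq> XX"
  unfolding opene_def by (meson openin_imp_subset)

lemma transitive_XX: "transitive XX TT"
  unfolding transitive_def
proof (intro allI impI)
  fix U V assume U: "opene XX U" and V: "opene XX V"
  obtain p0 where p0: "p0 \<in> U" using U opene_def by blast
  obtain p1 where p1: "p1 \<in> V" using V opene_def by blast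
  have p0X: "p0 \<in> XX" using p0 opene_sub[OF U] by blast
  have p1X: "p1 \<in> XX" using p1 opene_sub[OF V] by blast
  obtain \<alpha> \<xi> where pa: "p0 = enc \<alpha> \<xi>" "okp \<alpha> \<xi>" using XX_enc[OF p0X] by blast
  obtain \<beta> \<eta> where pb: "p1 = enc \<beta> \<eta>" "okp \<beta> \<eta>" using XX_enc[OF p1X] by blast
  have oU: "openin (top_of_set XX) U" using U opene_def by blast
  have oV: "openin (top_of_set XX) V" using V opene_def by blast
  obtain B1 where B1: "\<forall>p\<in>XX. (\<forall>i<B1. p i = p0 i) \<longrightarrow> p \<in> U"
    using open_nbhd[OF oU p0] by blast
  obtain B2 where B2: "\<forall>p\<in>XX. (\<forall>i<B2. p i = p1 i) \<longrightarrow> p \<in> V"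
    using open_nbhd[OF oV p1] by blast
  define B where "B = max B1 B2"
  from trans_points[OF pa(2) pb(2), of B]
  obtain m a x where m: "m \<ge> 1" "okp a x" "\<forall>k<B. a k = \<alpha> k" "\<forall>t<B. x t = \<xi> t"
      "\<forall>k<B. (a k + m) mod Q k = \<beta> k" "\<forall>t<B. x (t + m) = \<eta> t"
    by blast
  have ag1: "\<forall>i<B. enc a x i = p0 i"
    using enc_agree[OF m(3) m(4)] pa(1) by simp
  have "enc a x \<in> U"
  proof -
    have "\<forall>i<B1. enc a x i = p0 i" using ag1 unfolding B_def by simp
    then show ?thesis using B1 enc_in[OF m(2)] by blast
  qed
  moreover have "(TT ^^ m) (enc a x) \<in> V"
  proof -
    have e: "(TT ^^ m) (enc a x) = enc (\<lambda>k. (a k + m) mod Q k) (\<lambda>t. x (t + m))"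
      by (rule iter_enc[OF m(2)])
    have inX: "enc (\<lambda>k. (a k + m) mod Q k) (\<lambda>t. x (t + m)) \<in> XX"
      by (rule enc_in[OF okp_iter[OF m(2)]])
    have "\<forall>i<B. enc (\<lambda>k. (a k + m) mod Q k) (\<lambda>t. x (t + m)) i = enc \<beta> \<eta> i"
      using enc_agree[of B "\<lambda>k. (a k + m) mod Q k" \<beta> "\<lambda>t. x (t + m)" \<eta>] m(5) m(6) by blast
    then have "\<forall>i<B2. enc (\<lambda>k. (a k + m) mod Q k) (\<lambda>t. x (t + m)) i = p1 i"
      using pb(1) unfolding B_def by simp
    then show ?thesis using B2 inX e by simp
  qed
  ultimately show "\<exists>n\<ge>1. (TT ^^ n) ` U \<inter> V \<noteq> {}" using m(1) by blast
qed

definition del0 :: real where "del0 = (1/2)^(to_nat (1::nat)) / 2"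

lemma del0_pos: "del0 > 0" unfolding del0_def by simp

lemma sensitive_XX: "sensitive XX TT"
  unfolding sensitive_def
proof (intro exI[of _ del0] conjI allI impI del0_pos)
  fix U assume U: "opene XX U"
  obtain p0 where p0: "p0 \<in> U" using U opene_def by blast
  have p0X: "p0 \<in> XX" using p0 opene_sub[OF U] by blast
  obtain \<alpha> \<xi> where pa: "p0 = enc \<alpha> \<xi>" "okp \<alpha> \<xi>" using XX_enc[OF p0X] by blast
  have oU: "openin (top_of_set XX) U" using U opene_def by blast
  obtain B where B: "\<forall>p\<in>XX. (\<forall>i<B. p i = p0 i) \<longrightarrow> p \<in> U"
    using open_nbhd[OF oU p0] by blast
  show "infinite (S_T TT U del0)"
    unfolding infinite_nat_iff_unbounded_le
  proof
    fix N0
    from sens_points[OF pa(2), of "max N0 1" B]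
    obtain n a x where n: "n \<ge> max N0 1" "n \<ge> B" "okp a x" "x n" "\<forall>k<B. a k = \<alpha> k" "\<forall>t<B. x t = \<xi> t"
      by blast
    define x' where "x' = x(n := False)"
    have ok': "okp a x'" using n(3) unfolding okp_def x'_def by auto
    have "\<forall>i<B. enc a x i = p0 i" using enc_agree[OF n(5) n(6)] pa(1) by simp
    then have U1: "enc a x \<in> U" using B enc_in[OF n(3)] by blast
    have "\<forall>t<B. x' t = \<xi> t" using n(2) n(6) unfolding x'_def by auto
    then have "\<forall>i<B. enc a x' i = p0 i" using enc_agree[OF n(5)] pa(1) by simp
    then have U2: "enc a x' \<in> U" using B enc_in[OF ok'] by blast
    have c1: "(TT ^^ n) (enc a x) 1 = 1" using iter_enc[OF n(3)] n(4) by (simp add: enc_def)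
    have c2: "(TT ^^ n) (enc a x') 1 = 0" using iter_enc[OF ok'] by (simp add: enc_def x'_def)
    have "(1/2)^(to_nat (1::nat)) * min (dist ((TT ^^ n) (enc a x) 1) ((TT ^^ n) (enc a x') 1)) 1
          \<le> dist ((TT ^^ n) (enc a x)) ((TT ^^ n) (enc a x'))" by (rule dist_big)
    then have hc: "(1/2::real)^(to_nat (1::nat)) \<le> dist ((TT ^^ n) (enc a x)) ((TT ^^ n) (enc a x'))"
      using c1 c2 by simp
    have "(0::real) < (1/2)^(to_nat (1::nat))" by simp
    then have "dist ((TT ^^ n) (enc a x)) ((TT ^^ n) (enc a x')) > del0"
      using hc unfolding del0_def by linarith
    then have "n \<in> S_T TT U del0" unfolding S_T_def using n(1) U1 U2 by auto
    then show "\<exists>n\<ge>N0. n \<in> S_T TT U del0" using n(1) by auto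
  qed
qed

lemma real_ball_nat: "real m \<in> ball (real m') (1/2) \<longleftrightarrow> m = m'"
proof
  assume "real m \<in> ball (real m') (1/2)"
  then have h: "\<bar>real m' - real m\<bar> < 1/2" by (simp add: dist_real_def)
  show "m = m'"
  proof (rule ccontr)
    assume "m \<noteq> m'"
    then have "m < m' \<or> m' < m" by linarith
    have l: "real a + 1 \<le> real b" if "a < b" for a b :: nat
    proof -
      have "Suc a \<le> b" using that by simp
      then have "real (Suc a) \<le> real b" by (simp only: of_nat_le_iff)
      then show ?thesis by simp
    qed
    have "1 \<le> \<bar>real m' - real m\<bar>"
      using \<open>m < m' \<or> m' < m\<close> l[of m m'] l[of m' m] by linarith
    then show False using h by linarith
  qed
qed simp

lemma syndetic_mono: "A \<subseteq> B \<Longrightarrow> syndetic A \<Longrightarrow> syndetic B"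
  unfolding syndetic_def by blast

lemma mod_fill:
  fixes c m q :: nat
  assumes "0 < q"
  shows "(c + (m + 1 + (q - (c + m + 1) mod q) mod q)) mod q = 0"
proof -
  define r where "r = (c + m + 1) mod q"
  have r: "r < q" unfolding r_def using assms by simp
  have "(c + (m + 1 + (q - r) mod q)) mod q = ((c + m + 1) + (q - r) mod q) mod q" by (simp add: add.assoc)
  also have "\<dots> = (r + (q - r) mod q) mod q" unfolding r_def by (simp add: mod_add_left_eq)
  also have "\<dots> = (r + (q - r)) mod q" by (simp add: mod_add_right_eq)
  also have "r + (q - r) = q" using r by simp
  finally show ?thesis unfolding r_def by simp
qed

lemma syndetic_res:
  assumes "0 < q"
  shows "syndetic {n. 1 \<le> n \<and> (c + n) mod q = (0::nat)}"
  unfolding syndetic_def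
proof (intro exI[of _ "q + 1"] allI)
  fix m
  define d where "d = (q - (c + m + 1) mod q) mod q"
  define n where "n = m + 1 + d"
  have "d < q" unfolding d_def using assms by (rule mod_less_divisor)
  then have "m \<le> n \<and> n < m + (q + 1)" unfolding n_def by linarith
  moreover have "(c + n) mod q = 0" unfolding n_def d_def by (rule mod_fill[OF assms])
  moreover have "1 \<le> n" unfolding n_def by linarith
  ultimately have "n \<in> {n. 1 \<le> n \<and> (c + n) mod q = 0} \<and> m \<le> n \<and> n < m + (q + 1)" by simp
  then show "\<exists>n\<in>{n. 1 \<le> n \<and> (c + n) mod q = 0}. m \<le> n \<and> n < m + (q + 1)"
  proof (elim conjE)
    assume h: "n \<in> {n. 1 \<le> n \<and> (c + n) mod q = 0}" "m \<le> n" "n < m + (q + 1)"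
    show ?thesis by (rule bexI[OF _ h(1)]) (rule conjI[OF h(2) h(3)])
  qed
qed

lemma Eq_syn_point:
  assumes pX: "p \<in> XX" and e: "\<epsilon> > 0"
  shows "\<exists>U. openin (top_of_set XX) U \<and> p \<in> U \<and> syndetic (J_T TT U \<epsilon>)"
proof -
  obtain \<alpha> \<xi> where pa: "p = enc \<alpha> \<xi>" "okp \<alpha> \<xi>" using XX_enc[OF pX] by blast
  obtain N where N: "(1/2::real)^N < \<epsilon>" using real_arch_pow_inv[OF e, of "1/2"] by auto
  define B where "B = cut N"
  define W where "W = {f::nat\<Rightarrow>real. \<forall>k\<in>{..B}. f (2*k) \<in> ball (p (2*k)) (1/2)}"
  have oW: "open W" unfolding W_def
    by (rule product_topology_basis'[of "{..B}" "\<lambda>k. ball (p (2*k)) (1/2)" "\<lambda>k. 2*k"]) auto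
  define U where "U = XX \<inter> W"
  have oU: "openin (top_of_set XX) U" unfolding U_def using oW by (rule openin_open_Int)
  have pU: "p \<in> U" unfolding U_def W_def using pX by simp
  have Uchar: "\<exists>a x. q = enc a x \<and> okp a x \<and> (\<forall>k\<le>B. a k = \<alpha> k)" if "q \<in> U" for q
  proof -
    have qX: "q \<in> XX" using that U_def by blast
    obtain a x where qa: "q = enc a x" "okp a x" using XX_enc[OF qX] by blast
    have "a k = \<alpha> k" if "k \<le> B" for k
    proof -
      have h: "q (2*k) \<in> ball (p (2*k)) (1/2)" using \<open>q\<in>U\<close> that unfolding U_def W_def by auto
      have e1: "q (2*k) = real (a k)" by (simp add: qa(1) enc_def)
      have e2: "p (2*k) = real (\<alpha> k)" by (simp add: pa(1) enc_def)
      have "real (a k) \<in> ball (real (\<alpha> k)) (1/2)" using h unfolding e1 e2 .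
      then show ?thesis using real_ball_nat by blast
    qed
    then show ?thesis using qa by blast
  qed
  define A where "A = {n. 1 \<le> n \<and> (\<alpha> B + n) mod Q B = (0::nat)}"
  have agree: "\<forall>i<B. (TT ^^ n) q i = enc (\<lambda>k. (\<alpha> k + n) mod Q k) (\<lambda>_. False) i"
    if qU: "q \<in> U" and nA: "n \<in> A" for q n
  proof -
    obtain a x where qa: "q = enc a x" "okp a x" "\<forall>k\<le>B. a k = \<alpha> k" using Uchar[OF qU] by blast
    have it: "(TT ^^ n) q = enc (\<lambda>k. (a k + n) mod Q k) (\<lambda>t. x (t + n))" using iter_enc[OF qa(2)] qa(1) by simp
    have bits: "\<not> x (t + n)" if "t < B" for t
    proof
      assume "x (t + n)"
      then have "inF a (t + n)" using okp_inF[OF qa(2)] by blast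
      then have "B < (a B + (t + n)) mod Q B" unfolding inF_def by blast
      also have "(a B + (t + n)) mod Q B = ((\<alpha> B + n) + t) mod Q B" using qa(3) by (simp add: ac_simps)
      also have "\<dots> = ((\<alpha> B + n) mod Q B + t) mod Q B" by (simp add: mod_add_left_eq)
      also have "\<dots> = t" using \<open>n\<in>A\<close> A_def \<open>t < B\<close> Q_gt[of B] by simp
      finally show False using \<open>t<B\<close> by simp
    qed
    have "\<forall>i<B. enc (\<lambda>k. (a k + n) mod Q k) (\<lambda>t. x (t + n)) i = enc (\<lambda>k. (\<alpha> k + n) mod Q k) (\<lambda>_. False) i"
      by (rule enc_agree) (use qa(3) bits in auto)
    then show ?thesis using it by simp
  qed
  have "A \<subseteq> J_T TT U \<epsilon>"
  proof
    fix n assume nA: "n \<in> A"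
    have "\<not> dist ((TT ^^ n) x1) ((TT ^^ n) x2) > \<epsilon>" if "x1 \<in> U" "x2 \<in> U" for x1 x2
    proof -
      have "\<forall>i<cut N. (TT ^^ n) x1 i = (TT ^^ n) x2 i"
        using agree[OF that(1) nA] agree[OF that(2) nA] unfolding B_def by simp
      then have "dist ((TT ^^ n) x1) ((TT ^^ n) x2) \<le> (1/2)^N" by (rule dist_small)
      then show ?thesis using N by simp
    qed
    then show "n \<in> J_T TT U \<epsilon>" using nA unfolding J_T_def S_T_def A_def by auto
  qed
  moreover have "syndetic A" unfolding A_def by (rule syndetic_res[OF Q_pos])
  ultimately show ?thesis using oU pU syndetic_mono by blast
qed

lemma Eq_syn_XX: "Eq_syn XX TT = XX"
  unfolding Eq_syn_def using Eq_syn_point by blast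

lemma not_thick_XX: "\<not> thickly_sensitive XX TT"
proof
  assume "thickly_sensitive XX TT"
  then obtain \<delta> where d: "\<delta> > 0" "\<forall>U. opene XX U \<longrightarrow> thick (S_T TT U \<delta>)"
    unfolding thickly_sensitive_def by blast
  have p: "enc (\<lambda>_. 0) (\<lambda>_. False) \<in> XX" by (rule enc_in) (simp add: okp_def Q_pos)
  obtain U where U: "openin (top_of_set XX) U" "enc (\<lambda>_. 0) (\<lambda>_. False) \<in> U" "syndetic (J_T TT U \<delta>)"
    using Eq_syn_point[OF p d(1)] by blast
  have "opene XX U" using U unfolding opene_def by blast
  then have th: "thick (S_T TT U \<delta>)" using d by blast
  obtain k where k: "\<forall>m. \<exists>n\<in>J_T TT U \<delta>. m \<le> n \<and> n < m + k" using U(3) syndetic_def by blast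
  obtain m where "{m..<m+k} \<subseteq> S_T TT U \<delta>" using th thick_def by blast
  moreover obtain n where "n \<in> J_T TT U \<delta>" "m \<le> n" "n < m + k" using k by blast
  ultimately show False unfolding J_T_def by auto
qed

definition YY :: "(nat \<Rightarrow> real) set" where
  "YY = XX \<inter> (\<Inter>n. {p. p (2*n+1) \<in> {0}})"

lemma closed_YY: "closed YY"
  unfolding YY_def
  by (intro closed_Int compact_imp_closed[OF compact_XX] closed_INT ballI closed_coord) auto

lemma p00: "okp (\<lambda>_. 0) (\<lambda>_. False)" by (simp add: okp_def Q_pos)

lemma YY_enc: "okp a (\<lambda>_. False) \<Longrightarrow> enc a (\<lambda>_. False) \<in> YY"
proof -
  assume ok: "okp a (\<lambda>_. False)"
  have "enc a (\<lambda>_. False) \<in> XX" by (rule enc_in[OF ok])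
  moreover have "\<forall>n. enc a (\<lambda>_. False) (2*n+1) \<in> {0}" by (simp add: enc_def)
  ultimately show ?thesis unfolding YY_def by blast
qed

lemma TT_YY: "TT ` YY \<subseteq> YY"
proof
  fix y assume "y \<in> TT ` YY"
  then obtain p where p: "p \<in> YY" "y = TT p" by blast
  then have pX: "p \<in> XX" unfolding YY_def by blast
  obtain a x where pa: "p = enc a x" "okp a x" using XX_enc[OF pX] by blast
  have "\<not> x n" for n
  proof -
    have "p (2*n+1) = 0" using p(1) unfolding YY_def by blast
    then show ?thesis unfolding pa(1) enc_def by (auto split: if_splits)
  qed
  then have x: "x = (\<lambda>_. False)" by auto
  have "y = (TT ^^ 1) p" using p(2) by simp
  also have "\<dots> = enc (\<lambda>k. (a k + 1) mod Q k) (\<lambda>t. x (t + 1))"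
    unfolding pa(1) by (rule iter_enc[OF pa(2)])
  finally have y: "y = enc (\<lambda>k. (a k + 1) mod Q k) (\<lambda>t. x (t + 1))" .
  have "okp (\<lambda>k. (a k + 1) mod Q k) (\<lambda>t. x (t + 1))" by (rule okp_iter[OF pa(2)])
  then have "enc (\<lambda>k. (a k + 1) mod Q k) (\<lambda>t. x (t + 1)) \<in> YY" using YY_enc x by simp
  then show "y \<in> YY" using y by simp
qed

lemma q1: "okp (\<lambda>k. Q k - 1) (\<lambda>n. n = 0)"
  unfolding okp_def inF_def
proof (intro conjI allI impI)
  fix k show "Q k - 1 < Q k" using Q_pos[of k] by simp
next
  fix n k :: nat assume "n = 0"
  have "k < Q k - 1" using Q_gt[of k] by linarith
  then show "k < (Q k - 1 + n) mod Q k" using \<open>n = 0\<close> Q_pos[of k] by simp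
qed

lemma q1_notY: "enc (\<lambda>k. Q k - 1) (\<lambda>n. n = 0) \<notin> YY"
proof
  assume "enc (\<lambda>k. Q k - 1) (\<lambda>n. n = 0) \<in> YY"
  then have "enc (\<lambda>k. Q k - 1) (\<lambda>n. n = 0) (2*0+1) = 0" unfolding YY_def by blast
  then show False by (simp add: enc_def)
qed

lemma YY_ne_XX: "YY \<noteq> XX" using q1_notY enc_in[OF q1] by blast

lemma not_minimal_XX: "\<not> minimal XX TT"
  unfolding minimal_def
proof
  assume h: "\<forall>Y. Y \<subseteq> XX \<longrightarrow> closed Y \<longrightarrow> Y \<noteq> {} \<longrightarrow> TT ` Y \<subseteq> Y \<longrightarrow> Y = XX"
  have "YY \<subseteq> XX" unfolding YY_def by blast
  moreover have "YY \<noteq> {}" using YY_enc[OF p00] by blast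
  ultimately have "YY = XX" using h closed_YY TT_YY by blast
  then show False using YY_ne_XX by blast
qed

lemma Tran_XX: "Tran XX TT \<subset> Eq_syn XX TT"
proof -
  have sub: "Tran XX TT \<subseteq> XX" unfolding Tran_def by blast
  have p0X: "enc (\<lambda>_. 0) (\<lambda>_. False) \<in> XX" by (rule enc_in[OF p00])
  have "orbit TT (enc (\<lambda>_. 0) (\<lambda>_. False)) \<subseteq> YY"
  proof
    fix y assume "y \<in> orbit TT (enc (\<lambda>_. 0) (\<lambda>_. False))"
    then obtain n where "y = (TT ^^ n) (enc (\<lambda>_. 0) (\<lambda>_. False))" unfolding orbit_def by blast
    then have "y = enc (\<lambda>k. (0 + n) mod Q k) (\<lambda>_. False)" using iter_enc[OF p00] by simp
    then show "y \<in> YY" using YY_enc okp_iter[OF p00, of n] by simp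
  qed
  then have "closure (orbit TT (enc (\<lambda>_. 0) (\<lambda>_. False))) \<subseteq> YY"
    using closed_YY by (rule closure_minimal)
  moreover have YX: "YY \<subseteq> XX" unfolding YY_def by blast
  ultimately have "enc (\<lambda>_. 0) (\<lambda>_. False) \<notin> Tran XX TT"
    unfolding Tran_def using YY_ne_XX by auto
  then show ?thesis using sub p0X Eq_syn_XX by blast
qed

definition MM :: "nat + nat \<Rightarrow> nat measure" where
  "MM i = (case i of Inl k \<Rightarrow> measure_pmf (pmf_of_set {..<Q k}) | Inr n \<Rightarrow> measure_pmf (pmf_of_set {0,1}))"

definition PP :: "(nat + nat \<Rightarrow> nat) measure" where
  "PP = PiM UNIV MM"

lemma MM_prob: "prob_space (MM i)"
  unfolding MM_def by (cases i) (auto intro: measure_pmf.prob_space_axioms)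

interpretation MMP: product_prob_space MM UNIV
  by (simp add: product_prob_space_def product_sigma_finite_def MM_prob
      prob_space_imp_sigma_finite product_prob_space_axioms_def)

lemma sets_MM[simp]: "sets (MM i) = UNIV"
  unfolding MM_def by (cases i) auto

lemma space_MM[simp]: "space (MM i) = UNIV"
  unfolding MM_def by (cases i) auto

lemma space_PP[simp]: "space PP = UNIV"
  unfolding PP_def by (simp add: space_PiM)

lemma prob_PP: "prob_space PP" unfolding PP_def by (rule MMP.prob_space_axioms)

lemma meas_to_MM: "f \<in> measurable N (MM i)" if "f \<in> measurable N (count_space UNIV)"
  using that by (simp add: measurable_def)

lemma comp_meas: "(\<lambda>s. f (s i)) \<in> measurable PP N" if "space N \<noteq> {} \<or> True" and "f \<in> UNIV \<rightarrow> space N"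
proof -
  have "(\<lambda>s. s i) \<in> measurable PP (MM i)" unfolding PP_def by (rule measurable_component_singleton) simp
  moreover have "f \<in> measurable (MM i) N"
    using that(2) by (simp add: measurable_def)
  ultimately show ?thesis by (rule measurable_compose)
qed

definition SS :: "(nat + nat \<Rightarrow> nat) \<Rightarrow> (nat + nat \<Rightarrow> nat)" where
  "SS s = (\<lambda>i. case i of Inl k \<Rightarrow> (s (Inl k) + 1) mod Q k | Inr n \<Rightarrow> s (Inr (Suc n)))"

lemma SS_meas: "SS \<in> measurable PP PP"
proof -
  have "(\<lambda>s. SS s i) \<in> measurable PP (MM i)" for i
  proof (cases i)
    case (Inl k)
    have "(\<lambda>s. (\<lambda>v. (v + 1) mod Q k) (s (Inl k))) \<in> measurable PP (MM i)"
      by (rule comp_meas) auto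
    then show ?thesis unfolding SS_def Inl by simp
  next
    case (Inr n)
    have "(\<lambda>s. (\<lambda>v. v) (s (Inr (Suc n)))) \<in> measurable PP (MM i)"
      by (rule comp_meas) auto
    then show ?thesis unfolding SS_def Inr by simp
  qed
  then have "(\<lambda>s i. SS s i) \<in> measurable PP (PiM UNIV MM)"
    by (intro measurable_PiM_single') (auto simp: space_PiM)
  then show ?thesis unfolding PP_def by simp
qed

lemma card_shift:
  fixes q :: nat
  assumes q: "0 < q"
  shows "card ({..<q} \<inter> {v. (v+1) mod q \<in> F}) = card ({..<q} \<inter> F)"
proof -
  let ?f = "\<lambda>v. (v+1) mod q"
  have inj: "inj_on ?f ({..<q} \<inter> {v. (v+1) mod q \<in> F})"
  proof
    fix c c' assume c: "c \<in> {..<q} \<inter> {v. (v+1) mod q \<in> F}" and c': "c' \<in> {..<q} \<inter> {v. (v+1) mod q \<in> F}"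
      and h: "(c + 1) mod q = (c' + 1) mod q"
    then have "[c + 1 = c' + 1] (mod q)" by (simp add: cong_def)
    then have "[c = c'] (mod q)" by (metis cong_add_rcancel_nat)
    then show "c = c'" using c c' by (simp add: cong_def)
  qed
  have img: "?f ` ({..<q} \<inter> {v. (v+1) mod q \<in> F}) = {..<q} \<inter> F"
  proof
    show "?f ` ({..<q} \<inter> {v. (v+1) mod q \<in> F}) \<subseteq> {..<q} \<inter> F" using q by auto
  next
    show "{..<q} \<inter> F \<subseteq> ?f ` ({..<q} \<inter> {v. (v+1) mod q \<in> F})"
    proof
      fix w assume w: "w \<in> {..<q} \<inter> F"
      define v where "v = (w + (q - 1)) mod q"
      have "(v + 1) mod q = w"
      proof -
        have "(v + 1) mod q = Suc (w + (q - 1)) mod q" unfolding v_def by (simp add: mod_Suc_eq)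
        also have "Suc (w + (q - 1)) = w + q" using q by simp
        finally show ?thesis using w by simp
      qed
      moreover have "v < q" unfolding v_def using q by simp
      ultimately show "w \<in> ?f ` ({..<q} \<inter> {v. (v+1) mod q \<in> F})" using w by (intro image_eqI[of _ _ v]) auto
    qed
  qed
  show ?thesis using card_image[OF inj] img by simp
qed

lemma MM_Inl: "emeasure (MM (Inl k)) {v. (v+1) mod Q k \<in> F} = emeasure (MM (Inl k)) F"
proof -
  have ne: "{..<Q k} \<noteq> {}" using Q_pos[of k] by auto
  show ?thesis unfolding MM_def
    using card_shift[OF Q_pos[of k], of F] by (simp add: emeasure_pmf_of_set[OF ne])
qed

definition hh :: "nat + nat \<Rightarrow> nat + nat" where
  "hh j = (case j of Inl k \<Rightarrow> Inl k | Inr n \<Rightarrow> Inr (Suc n))"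

lemma inj_hh: "inj hh"
  unfolding inj_def hh_def by (auto split: sum.splits)

lemma SS_pres: "distr PP PP SS = PP"
  unfolding PP_def
proof (rule MMP.PiM_eq)
  show "sets (distr (Pi\<^sub>M UNIV MM) (Pi\<^sub>M UNIV MM) SS) = sets (Pi\<^sub>M UNIV MM)" by simp
next
  fix J :: "(nat + nat) set" and F assume J: "finite J" "J \<subseteq> UNIV" and F: "\<And>j. j \<in> J \<Longrightarrow> F j \<in> sets (MM j)"
  define G where "G i = (case i of Inl k \<Rightarrow> {v. (v+1) mod Q k \<in> F (Inl k)} | Inr m \<Rightarrow> F (Inr (m - 1)))" for i
  have SSmeas: "SS \<in> measurable (Pi\<^sub>M UNIV MM) (Pi\<^sub>M UNIV MM)" using SS_meas unfolding PP_def .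
  have inS: "prod_emb UNIV MM J (Pi\<^sub>E J F) \<in> sets (Pi\<^sub>M UNIV MM)"
    using J F by (intro sets_PiM_I) auto
  have "emeasure (distr (Pi\<^sub>M UNIV MM) (Pi\<^sub>M UNIV MM) SS) (prod_emb UNIV MM J (Pi\<^sub>E J F))
      = emeasure (Pi\<^sub>M UNIV MM) (SS -` prod_emb UNIV MM J (Pi\<^sub>E J F) \<inter> space (Pi\<^sub>M UNIV MM))"
    by (rule emeasure_distr[OF SSmeas inS])
  also have "SS -` prod_emb UNIV MM J (Pi\<^sub>E J F) \<inter> space (Pi\<^sub>M UNIV MM)
      = {x\<in>space (Pi\<^sub>M UNIV MM). \<forall>i\<in>hh ` J. x i \<in> G i}"
  proof -
    have "SS s j \<in> F j \<longleftrightarrow> s (hh j) \<in> G (hh j)" for s j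
      unfolding SS_def hh_def G_def by (cases j) auto
    then show ?thesis by (auto simp: prod_emb_def space_PiM PiE_iff)
  qed
  also have "emeasure (Pi\<^sub>M UNIV MM) {x\<in>space (Pi\<^sub>M UNIV MM). \<forall>i\<in>hh ` J. x i \<in> G i}
      = (\<Prod>i\<in>hh ` J. emeasure (MM i) (G i))"
    using J by (intro MMP.emeasure_PiM_Collect) auto
  also have "\<dots> = (\<Prod>j\<in>J. emeasure (MM (hh j)) (G (hh j)))"
    by (rule prod.reindex[OF inj_on_subset[OF inj_hh subset_UNIV], unfolded comp_def])
  also have "\<dots> = (\<Prod>j\<in>J. emeasure (MM j) (F j))"
  proof (rule prod.cong[OF refl])
    fix j assume "j \<in> J"
    show "emeasure (MM (hh j)) (G (hh j)) = emeasure (MM j) (F j)"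
    proof (cases j)
      case (Inl k)
      then show ?thesis unfolding hh_def G_def using MM_Inl by simp
    next
      case (Inr n)
      then show ?thesis unfolding hh_def G_def MM_def by simp
    qed
  qed
  finally show "emeasure (distr (Pi\<^sub>M UNIV MM) (Pi\<^sub>M UNIV MM) SS) (prod_emb UNIV MM J (Pi\<^sub>E J F))
      = (\<Prod>j\<in>J. emeasure (MM j) (F j))" .
qed

definition aa :: "(nat + nat \<Rightarrow> nat) \<Rightarrow> nat \<Rightarrow> nat" where
  "aa s = (\<lambda>k. s (Inl k) mod Q k)"

definition bb :: "(nat + nat \<Rightarrow> nat) \<Rightarrow> nat \<Rightarrow> bool" where
  "bb s = (\<lambda>n. s (Inr n) mod 2 = 1 \<and> inF (aa s) n)"

definition Phi :: "(nat + nat \<Rightarrow> nat) \<Rightarrow> nat \<Rightarrow> real" where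
  "Phi s = enc (aa s) (bb s)"

lemma aa_lt: "\<forall>k. aa s k < Q k" unfolding aa_def using Q_pos by simp

lemma okp_Phi: "okp (aa s) (bb s)"
  unfolding okp_def using aa_lt unfolding bb_def by simp

lemma Phi_XX: "Phi s \<in> XX" unfolding Phi_def by (rule enc_in[OF okp_Phi])

lemma Phi_SS: "Phi (SS s) = TT (Phi s)"
proof -
  have a: "aa (SS s) = R (aa s)"
    unfolding aa_def SS_def R_def by (auto simp: fun_eq_iff mod_Suc_eq)
  have b: "bb (SS s) = (\<lambda>n. bb s (Suc n))"
  proof
    fix n
    have "inF (R (aa s)) n \<longleftrightarrow> inF (aa s) (n + 1)"
      unfolding R_def using inF_shift[OF aa_lt[of s], where m=1 and n=n] by simp
    then show "bb (SS s) n = bb s (Suc n)" unfolding bb_def a by (simp add: SS_def)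
  qed
  show ?thesis unfolding Phi_def TT_enc[OF aa_lt] a b ..
qed

lemma sets_coord: "{s. P (s i)} \<in> sets PP"
proof -
  have "(\<lambda>s. s i) \<in> measurable PP (MM i)" unfolding PP_def by (rule measurable_component_singleton) simp
  then have "(\<lambda>s. s i) -` {v. P v} \<inter> space PP \<in> sets PP" by (rule measurable_sets) simp
  then show ?thesis by (simp add: vimage_def)
qed

lemma Phi_meas_borel: "Phi \<in> borel_measurable PP"
proof (rule measurable_coordinatewise_then_product)
  fix i
  show "(\<lambda>s. Phi s i) \<in> borel_measurable PP"
  proof (cases "even i")
    case True
    then obtain k where i: "i = 2*k" by blast
    have "(\<lambda>s. (\<lambda>v. real (v mod Q k)) (s (Inl k))) \<in> borel_measurable PP"
      by (rule comp_meas) auto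
    then show ?thesis unfolding Phi_def enc_def aa_def i by simp
  next
    case False
    then obtain n where i: "i = 2*n+1" using oddE by blast
    define Bs where "Bs = {s. s (Inr n) mod 2 = 1} \<inter> (\<Inter>k. {s. k < (s (Inl k) mod Q k + n) mod Q k})"
    have c1: "{s. s (Inr n) mod 2 = 1} \<in> sets PP" using sets_coord[of "\<lambda>v. v mod 2 = 1" "Inr n"] by simp
    have c2: "{s. k < (s (Inl k) mod Q k + n) mod Q k} \<in> sets PP" for k
      using sets_coord[of "\<lambda>v. k < (v mod Q k + n) mod Q k" "Inl k"] by simp
    have "Bs \<in> sets PP" unfolding Bs_def
      by (intro sets.Int sets.countable_INT' c1) (use c2 in auto)
    then have "indicator Bs \<in> borel_measurable PP" by (rule borel_measurable_indicator)
    moreover have "(\<lambda>s. Phi s i) = indicator Bs"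
      unfolding Phi_def enc_def i bb_def inF_def aa_def Bs_def by (auto simp: fun_eq_iff indicator_def)
    ultimately show ?thesis by simp
  qed
qed

lemma Phi_meas: "Phi \<in> measurable PP (restrict_space borel XX)"
  by (rule measurable_restrict_space2) (auto simp: Phi_XX Phi_meas_borel)

definition MEAS :: "(nat \<Rightarrow> real) measure" where
  "MEAS = distr PP (restrict_space borel XX) Phi"

lemma TT_meas: "TT \<in> measurable (restrict_space borel XX) (restrict_space borel XX)"
proof (rule measurable_restrict_space2)
  show "TT \<in> space (restrict_space borel XX) \<rightarrow> XX" using TT_XX by (auto simp: space_restrict_space)
  show "TT \<in> borel_measurable (restrict_space borel XX)"
    by (rule borel_measurable_continuous_on_restrict[OF continuous_TT])
qed

lemma MEAS_inv:
  assumes A: "A \<in> sets MEAS"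
  shows "measure MEAS (TT -` A \<inter> XX) = measure MEAS A"
proof -
  have A': "A \<in> sets (restrict_space borel XX)" using A unfolding MEAS_def by simp
  have TA: "TT -` A \<inter> XX \<in> sets (restrict_space borel XX)"
    using measurable_sets[OF TT_meas A'] by (simp add: space_restrict_space)
  have "measure MEAS (TT -` A \<inter> XX) = measure PP (Phi -` (TT -` A \<inter> XX) \<inter> space PP)"
    unfolding MEAS_def by (rule measure_distr[OF Phi_meas TA])
  also have "Phi -` (TT -` A \<inter> XX) \<inter> space PP = SS -` (Phi -` A \<inter> space PP) \<inter> space PP"
    using Phi_XX Phi_SS by auto
  also have "measure PP \<dots> = measure (distr PP PP SS) (Phi -` A \<inter> space PP)"
    by (rule measure_distr[symmetric, OF SS_meas measurable_sets[OF Phi_meas A']])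
  also have "\<dots> = measure PP (Phi -` A \<inter> space PP)" using SS_pres by simp
  also have "\<dots> = measure MEAS A"
    unfolding MEAS_def by (rule measure_distr[symmetric, OF Phi_meas A'])
  finally show ?thesis .
qed

interpretation PPp: prob_space PP by (rule prob_PP)

lemma MM_fin: "finite_measure (MM i)" using MM_prob prob_space.finite_measure by blast

lemma PP_cyl:
  assumes "finite J"
  shows "measure PP {s. \<forall>i\<in>J. s i \<in> X i} = (\<Prod>i\<in>J. measure (MM i) (X i))"
proof -
  have "emeasure (PiM UNIV MM) {x\<in>space (PiM UNIV MM). \<forall>i\<in>J. x i \<in> X i} = (\<Prod>i\<in>J. emeasure (MM i) (X i))"
    using assms by (intro MMP.emeasure_PiM_Collect) auto
  then have "ennreal (measure PP {s. \<forall>i\<in>J. s i \<in> X i}) = (\<Prod>i\<in>J. ennreal (measure (MM i) (X i)))"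
    using finite_measure.emeasure_eq_measure[OF MM_fin] PPp.emeasure_eq_measure
    unfolding PP_def by (simp add: space_PiM)
  also have "\<dots> = ennreal (\<Prod>i\<in>J. measure (MM i) (X i))" by (simp add: prod_ennreal)
  finally show ?thesis by (simp add: prod_nonneg)
qed

lemma MM_Inl_meas: "measure (MM (Inl k)) A = card ({..<Q k} \<inter> A) / Q k"
proof -
  have ne: "{..<Q k} \<noteq> {}" using Q_pos[of k] by auto
  show ?thesis unfolding MM_def using measure_pmf_of_set[OF ne] by simp
qed

lemma MM_Inr_meas: "measure (MM (Inr t)) A = card ({0,1} \<inter> A) / 2"
proof -
  have ne: "{0,1::nat} \<noteq> {}" by auto
  show ?thesis unfolding MM_def using measure_pmf_of_set[OF ne] by simp
qed

lemma BadV_bound: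
  assumes "finite Ts" "card Ts \<le> B"
  shows "measure (MM (Inl k)) {v. \<exists>t\<in>Ts. (v mod Q k + t) mod Q k \<le> k} \<le> B / 2^(k+1)"
proof -
  have sub: "{..<Q k} \<inter> {v. \<exists>t\<in>Ts. (v mod Q k + t) mod Q k \<le> k} \<subseteq> (\<Union>t\<in>Ts. {c. c < Q k \<and> (c + t) mod Q k \<le> k})"
    by auto
  have "card ({..<Q k} \<inter> {v. \<exists>t\<in>Ts. (v mod Q k + t) mod Q k \<le> k}) \<le> card (\<Union>t\<in>Ts. {c. c < Q k \<and> (c + t) mod Q k \<le> k})"
    by (rule card_mono[OF _ sub]) (use assms(1) in auto)
  also have "\<dots> \<le> (\<Sum>t\<in>Ts. card {c. c < Q k \<and> (c + t) mod Q k \<le> k})" by (rule card_UN_le[OF assms(1)])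
  also have "\<dots> \<le> (\<Sum>t\<in>Ts. k + 1)" by (intro sum_mono card_bad)
  also have "\<dots> = card Ts * (k+1)" by simp
  also have "\<dots> \<le> B * (k+1)" using assms(2) by (rule mult_le_mono1)
  finally have c0: "card ({..<Q k} \<inter> {v. \<exists>t\<in>Ts. (v mod Q k + t) mod Q k \<le> k}) \<le> B * (k+1)" .
  have c: "real (card ({..<Q k} \<inter> {v. \<exists>t\<in>Ts. (v mod Q k + t) mod Q k \<le> k})) \<le> real B * (real k + 1)"
  proof -
    from c0 have "real (card ({..<Q k} \<inter> {v. \<exists>t\<in>Ts. (v mod Q k + t) mod Q k \<le> k})) \<le> real (B * (k+1))"
      by (simp only: of_nat_le_iff)
    then show ?thesis by (simp add: algebra_simps)
  qed
  have q: "real (4^(k+1)) \<le> real (Q k)" using Q_big[of k] by (simp only: of_nat_le_iff)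
  have k2: "real k + 1 \<le> 2^(k+1)"
  proof -
    have "k + 1 < 2^(k+1)" by (rule less_exp)
    then have "real (k+1) \<le> real (2^(k+1))" by (simp only: of_nat_le_iff)
    then show ?thesis by simp
  qed
  have "measure (MM (Inl k)) {v. \<exists>t\<in>Ts. (v mod Q k + t) mod Q k \<le> k}
      = card ({..<Q k} \<inter> {v. \<exists>t\<in>Ts. (v mod Q k + t) mod Q k \<le> k}) / Q k" by (rule MM_Inl_meas)
  also have "\<dots> \<le> real B * (real k + 1) / Q k" using Q_pos[of k] c by (simp add: divide_right_mono)
  also have "\<dots> \<le> real B * (real k + 1) / 4^(k+1)"
    using q Q_pos[of k] by (intro divide_left_mono) (auto simp: of_nat_power)
  also have "\<dots> \<le> real B * 2^(k+1) / 4^(k+1)"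
    using k2 by (intro divide_right_mono mult_left_mono) auto
  also have "real B * 2^(k+1) / 4^(k+1) = real B / 2^(k+1)"
  proof -
    have "(4::real)^(k+1) = (2*2)^(k+1)" by simp
    also have "\<dots> = 2^(k+1) * 2^(k+1)" by (rule power_mult_distrib)
    finally have "(4::real)^(k+1) = 2^(k+1) * 2^(k+1)" .
    then show ?thesis by simp
  qed
  finally show ?thesis .
qed

lemma pos_factor: "(\<forall>k<K. \<alpha> k < Q k) \<Longrightarrow> j \<in> Inl ` {..<K} \<union> Inr ` {..<B} \<Longrightarrow>
  0 < measure (MM j) (case j of Inl k \<Rightarrow> {\<alpha> k} | Inr t \<Rightarrow> {if \<xi> t then 1 else 0})"
proof -
  assume al: "\<forall>k<K. \<alpha> k < Q k" and j: "j \<in> Inl ` {..<K} \<union> Inr ` {..<B}"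
  show ?thesis
  proof (cases j)
    case (Inl k)
    then have "k < K" using j by auto
    then have "{..<Q k} \<inter> {\<alpha> k} = {\<alpha> k}" using al by auto
    then show ?thesis using Inl MM_Inl_meas[of k "{\<alpha> k}"] Q_pos[of k] by simp
  next
    case (Inr t)
    have "{0,1} \<inter> {if \<xi> t then 1 else 0::nat} = {if \<xi> t then 1 else 0}" by auto
    then show ?thesis using Inr MM_Inr_meas[of t "{if \<xi> t then 1 else 0}"] by simp
  qed
qed

lemma sets_U: "openin (top_of_set XX) U \<Longrightarrow> U \<in> sets (restrict_space borel XX)"
proof -
  assume "openin (top_of_set XX) U"
  then obtain T where T: "open T" "U = XX \<inter> T" by (auto simp: openin_open)
  have cl: "XX \<in> sets borel" using compact_imp_closed[OF compact_XX] by (rule borel_closed)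
  have "U \<in> sets borel" using T cl by auto
  then show ?thesis using T cl by (subst sets_restrict_space_iff) auto
qed

lemma MEAS_full:
  assumes U: "opene XX U"
  shows "emeasure MEAS U > 0"
proof -
  have oU: "openin (top_of_set XX) U" using U opene_def by blast
  obtain p0 where p0: "p0 \<in> U" using U opene_def by blast
  have p0X: "p0 \<in> XX" using p0 opene_sub[OF U] by blast
  obtain \<alpha> \<xi> where pa: "p0 = enc \<alpha> \<xi>" "okp \<alpha> \<xi>" using XX_enc[OF p0X] by blast
  obtain B where B: "\<forall>p\<in>XX. (\<forall>i<B. p i = p0 i) \<longrightarrow> p \<in> U"
    using open_nbhd[OF oU p0] by blast
  define K where "K = B + 1"
  define Ts where "Ts = {t. t < B \<and> \<xi> t}"
  have finTs: "finite Ts" unfolding Ts_def by auto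
  have cardTs: "card Ts \<le> B"
  proof -
    have "card Ts \<le> card {..<B}" unfolding Ts_def by (rule card_mono) auto
    then show ?thesis by simp
  qed
  define J0 where "J0 = Inl ` {..<K} \<union> Inr ` {..<B}"
  define X0 where "X0 j = (case j of Inl k \<Rightarrow> {\<alpha> k} | Inr t \<Rightarrow> {if \<xi> t then 1 else 0::nat})" for j
  define A0 where "A0 = {s. \<forall>j\<in>J0. s j \<in> X0 j}"
  define BadV where "BadV k = {v. \<exists>t\<in>Ts. (v mod Q k + t) mod Q k \<le> k}" for k
  define Bad where "Bad i = {s :: nat + nat \<Rightarrow> nat. s (Inl (K+i)) \<in> BadV (K+i)}" for i
  define E where "E = A0 - (\<Union>i. A0 \<inter> Bad i)"
  have finJ0: "finite J0" unfolding J0_def by auto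
  have alt: "\<alpha> k < Q k" for k using okp_lt[OF pa(2)] .
  have EU: "Phi s \<in> U" if sE: "s \<in> E" for s
  proof -
    have sA: "s \<in> A0" and nb: "\<And>i. s \<notin> Bad i" using sE unfolding E_def by auto
    have sa: "s (Inl k) = \<alpha> k" if "k < K" for k
    proof -
      have "Inl k \<in> J0" using that unfolding J0_def by auto
      then have "s (Inl k) \<in> X0 (Inl k)" using sA unfolding A0_def by blast
      then show ?thesis unfolding X0_def by simp
    qed
    have sb: "s (Inr t) = (if \<xi> t then 1 else 0)" if "t < B" for t
    proof -
      have "Inr t \<in> J0" using that unfolding J0_def by auto
      then have "s (Inr t) \<in> X0 (Inr t)" using sA unfolding A0_def by blast
      then show ?thesis unfolding X0_def by simp
    qed
    have aa1: "aa s k = \<alpha> k" if "k < K" for k unfolding aa_def using sa[OF that] alt[of k] by simp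
    have bb1: "bb s t = \<xi> t" if "t < B" for t
    proof (cases "\<xi> t")
      case True
      have "inF (aa s) t" unfolding inF_def
      proof
        fix k
        show "k < (aa s k + t) mod Q k"
        proof (cases "k < K")
          case True
          then show ?thesis using aa1[OF True] okp_inF[OF pa(2) \<open>\<xi> t\<close>] unfolding inF_def by simp
        next
          case False
          then have "k = K + (k - K)" by simp
          then have "s \<notin> Bad (k - K)" using nb by blast
          then have "\<not> (\<exists>t\<in>Ts. (s (Inl k) mod Q k + t) mod Q k \<le> k)"
            unfolding Bad_def BadV_def using \<open>k = K + (k - K)\<close> by simp
          moreover have "t \<in> Ts" unfolding Ts_def using \<open>t<B\<close> True by simp
          ultimately show ?thesis unfolding aa_def by force
        qed
      qed
      then show ?thesis unfolding bb_def using sb[OF that] True by simp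
    next
      case False
      then show ?thesis unfolding bb_def using sb[OF that] by simp
    qed
    have "\<forall>i<B. Phi s i = p0 i"
      unfolding Phi_def pa(1) by (rule enc_agree) (use aa1 bb1 K_def in auto)
    then show ?thesis using B Phi_XX by blast
  qed
  have setsA0: "A0 \<in> sets PP"
  proof -
    have "A0 = (\<Inter>j\<in>J0. {s. s j \<in> X0 j})" unfolding A0_def by auto
    moreover have "(\<Inter>j\<in>J0. {s. s j \<in> X0 j}) \<in> sets PP"
    proof (cases "J0 = {}")
      case True then show ?thesis using sets.top[of PP] by simp
    next
      case False
      show ?thesis using finJ0 False
        by (intro sets.finite_INT) (auto intro: sets_coord[of "\<lambda>v. v \<in> X0 _", simplified])
    qed
    ultimately show ?thesis by simp
  qed
  have setsBad: "A0 \<inter> Bad i \<in> sets PP" for i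
    using setsA0 sets_coord[of "\<lambda>v. v \<in> BadV (K+i)" "Inl (K+i)"] unfolding Bad_def by auto
  have mA0: "measure PP A0 = (\<Prod>j\<in>J0. measure (MM j) (X0 j))" unfolding A0_def by (rule PP_cyl[OF finJ0])
  have mA0pos: "measure PP A0 > 0"
    unfolding mA0 X0_def J0_def by (rule prod_pos) (use pos_factor alt in blast)
  have mBad: "measure PP (A0 \<inter> Bad i) = measure PP A0 * measure (MM (Inl (K+i))) (BadV (K+i))" for i
  proof -
    define X1 where "X1 = X0(Inl (K+i) := BadV (K+i))"
    have nin: "Inl (K+i) \<notin> J0" unfolding J0_def by auto
    have "A0 \<inter> Bad i = {s. \<forall>j\<in>insert (Inl (K+i)) J0. s j \<in> X1 j}"
      unfolding A0_def Bad_def X1_def using nin by auto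
    then have "measure PP (A0 \<inter> Bad i) = (\<Prod>j\<in>insert (Inl (K+i)) J0. measure (MM j) (X1 j))"
      using PP_cyl[of "insert (Inl (K+i)) J0" X1] finJ0 by simp
    also have "\<dots> = measure (MM (Inl (K+i))) (X1 (Inl (K+i))) * (\<Prod>j\<in>J0. measure (MM j) (X1 j))"
      by (rule prod.insert[OF finJ0 nin])
    also have "(\<Prod>j\<in>J0. measure (MM j) (X1 j)) = (\<Prod>j\<in>J0. measure (MM j) (X0 j))"
      using nin unfolding X1_def by (intro prod.cong) auto
    finally show ?thesis unfolding mA0[symmetric] X1_def by simp
  qed
  define c where "c = measure PP A0 * real B / 2^(K+1)"
  have bnd: "measure PP (A0 \<inter> Bad i) \<le> c * (1/2)^i" for i
  proof -
    have "measure PP (A0 \<inter> Bad i) \<le> measure PP A0 * (real B / 2^(K+i+1))"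
      unfolding mBad BadV_def using BadV_bound[OF finTs cardTs, of "K+i"] mA0pos
      by (intro mult_left_mono) auto
    also have "\<dots> = c * (1/2)^i" unfolding c_def by (simp add: power_add field_simps)
    finally show ?thesis .
  qed
  have c0: "c \<ge> 0" unfolding c_def using mA0pos by simp
  have summ: "summable (\<lambda>i. measure PP (A0 \<inter> Bad i))"
    by (rule summable_comparison_test'[of "\<lambda>i. c * (1/2)^i"]) (use bnd in \<open>auto intro: summable_mult summable_geometric\<close>)
  have "measure PP (\<Union>i. A0 \<inter> Bad i) \<le> (\<Sum>i. measure PP (A0 \<inter> Bad i))"
    using setsBad summ by (intro PPp.finite_measure_subadditive_countably) auto
  also have "\<dots> \<le> (\<Sum>i. c * (1/2)^i)"
    by (rule suminf_le[OF bnd summ]) (intro summable_mult summable_geometric, simp)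
  also have "\<dots> = c * 2" using suminf_geometric[of "1/2::real"] by (simp add: suminf_mult)
  also have "\<dots> \<le> measure PP A0 / 2"
  proof -
    have "real B < 2^B" using less_exp[of B] by (metis of_nat_less_iff of_nat_numeral of_nat_power)
    then have "real B * 2 \<le> 2^(K+1) / 2" unfolding K_def by simp
    then have "c * 2 = measure PP A0 * (real B * 2 / 2^(K+1))" unfolding c_def by simp
    also have "\<dots> \<le> measure PP A0 * (1/2)"
      using \<open>real B * 2 \<le> 2^(K+1) / 2\<close> mA0pos by (intro mult_left_mono) (auto simp: field_simps)
    finally show ?thesis by simp
  qed
  finally have un: "measure PP (\<Union>i. A0 \<inter> Bad i) \<le> measure PP A0 / 2" .
  have unS: "(\<Union>i. A0 \<inter> Bad i) \<in> sets PP" by (rule sets.countable_UN) (use setsBad in blast)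
  have "measure PP E = measure PP A0 - measure PP (\<Union>i. A0 \<inter> Bad i)"
    unfolding E_def by (rule PPp.finite_measure_Diff[OF setsA0 unS]) auto
  then have mE: "measure PP E > 0" using un mA0pos by linarith
  have EU': "E \<subseteq> Phi -` U \<inter> space PP" using EU by auto
  have setsE: "E \<in> sets PP" unfolding E_def using setsA0 unS by auto
  have "emeasure MEAS U = emeasure PP (Phi -` U \<inter> space PP)"
    unfolding MEAS_def by (rule emeasure_distr[OF Phi_meas sets_U[OF oU]])
  moreover have "emeasure PP E \<le> emeasure PP (Phi -` U \<inter> space PP)"
    by (rule emeasure_mono[OF EU']) (rule measurable_sets[OF Phi_meas sets_U[OF oU]])
  moreover have "emeasure PP E > 0" using mE PPp.emeasure_eq_measure by simp
  ultimately show ?thesis by (metis order.strict_trans2)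
qed

lemma prob_MEAS: "prob_space MEAS"
  unfolding MEAS_def by (rule PPp.prob_space_distr[OF Phi_meas])

lemma full_meas: "has_full_invariant_measure XX TT"
  unfolding has_full_invariant_measure_def
proof (intro exI[of _ MEAS] conjI ballI allI impI)
  show "prob_space MEAS" by (rule prob_MEAS)
  show "sets MEAS = sets (restrict_space borel XX)" unfolding MEAS_def by simp
  show "space MEAS = XX" unfolding MEAS_def by (simp add: space_restrict_space)
  show "measure MEAS (TT -` A \<inter> XX) = measure MEAS A" if "A \<in> sets MEAS" for A
    by (rule MEAS_inv[OF that])
  show "emeasure MEAS U > 0" if "opene XX U" for U by (rule MEAS_full[OF that])
qed

theorem mainTheorem6:
  shows "\<exists>(X :: (nat \<Rightarrow> real) set) T.
           tds X T \<and> E_system X T \<and> \<not> minimal X T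
         \<and> sensitive X T \<and> \<not> thickly_sensitive X T
         \<and> Tran X T \<subset> Eq_syn X T \<and> Eq_syn X T = X"
proof (intro exI[of _ XX] exI[of _ TT] conjI)
  show "tds XX TT" unfolding tds_def
    using compact_XX enc_in[OF p00] continuous_TT TT_XX by blast
  show "E_system XX TT" unfolding E_system_def using transitive_XX full_meas by blast
  show "\<not> minimal XX TT" by (rule not_minimal_XX)
  show "sensitive XX TT" by (rule sensitive_XX)
  show "\<not> thickly_sensitive XX TT" by (rule not_thick_XX)
  show "Tran XX TT \<subset> Eq_syn XX TT" by (rule Tran_XX)
  show "Eq_syn XX TT = XX" by (rule Eq_syn_XX)
qed

end
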